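(* Let $\mathbf{P}=(X,P)$ be a CPT poset and let $M$ be a strong module of $\mathbf{P}$. If there exists a CPT representation $\{W_x\}_{x\in X}$ of $\mathbf{P}$ in which some element $x\in M$ is represented by a trivial path (a single vertex), then no element of $M$ is greater than an element of $X\setminus M$; that is, there are no $m\in M$ and $y\in X\setminus M$ with $y<m$.
   Context: A CPT representation of a poset $\mathbf{P}=(X,P)$ assigns to each $x\in X$ a path $W_x$ (vertex set) of a host tree $T$ so that $x<y$ iff $W_x\subsetneq W_y$. A set $M\subseteq X$ is a module if every $y\notin M$ is comparable to all elements of $M$ or incomparable to all of them; it is strong if it does not properly overlap any other module (for every module $M'$, $M\cap M'=\emptyset$ or $M\subseteq M'$ or $M'\subseteq M$). A trivial path is a path consisting of a single vertex. *)

theory Defs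
  imports Main
begin

definition strict_poset :: "'a set \<Rightarrow> ('a \<Rightarrow> 'a \<Rightarrow> bool) \<Rightarrow> bool" where
  "strict_poset X lt \<longleftrightarrow>
     finite X \<and>
     (\<forall>x\<in>X. \<not> lt x x) \<and>
     (\<forall>x\<in>X. \<forall>y\<in>X. \<forall>z\<in>X. lt x y \<longrightarrow> lt y z \<longrightarrow> lt x z)"

definition comparable :: "('a \<Rightarrow> 'a \<Rightarrow> bool) \<Rightarrow> 'a \<Rightarrow> 'a \<Rightarrow> bool" where
  "comparable lt x y \<longleftrightarrow> lt x y \<or> lt y x"

definition is_tree :: "'v set \<Rightarrow> 'v set set \<Rightarrow> bool" where
  "is_tree V E \<longleftrightarrow>
     finite V \<and> V \<noteq> {} \<and>
     (\<forall>e\<in>E. \<exists>u v. e = {u, v} \<and> u \<noteq> v \<and> u \<in> V \<and> v \<in> V) \<and>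
     (\<forall>u\<in>V. \<forall>v\<in>V. (\<lambda>a b. {a, b} \<in> E)\<^sup>*\<^sup>* u v) \<and>
     card E = card V - 1"

definition is_path :: "'v set \<Rightarrow> 'v set set \<Rightarrow> 'v set \<Rightarrow> bool" where
  "is_path V E P \<longleftrightarrow>
     (\<exists>vs. vs \<noteq> [] \<and> distinct vs \<and> set vs = P \<and> set vs \<subseteq> V \<and>
           (\<forall>i. Suc i < length vs \<longrightarrow> {vs ! i, vs ! Suc i} \<in> E))"

definition cpt_rep :: "'a set \<Rightarrow> ('a \<Rightarrow> 'a \<Rightarrow> bool) \<Rightarrow> 'v set \<Rightarrow> 'v set set \<Rightarrow> ('a \<Rightarrow> 'v set) \<Rightarrow> bool" where
  "cpt_rep X lt V E W \<longleftrightarrow>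
     is_tree V E \<and>
     (\<forall>x\<in>X. is_path V E (W x)) \<and>
     (\<forall>x\<in>X. \<forall>y\<in>X. lt x y \<longleftrightarrow> W x \<subset> W y)"

definition is_CPT_poset :: "'v itself \<Rightarrow> 'a set \<Rightarrow> ('a \<Rightarrow> 'a \<Rightarrow> bool) \<Rightarrow> bool" where
  "is_CPT_poset _ X lt \<longleftrightarrow> strict_poset X lt \<and>
     (\<exists>(V::'v set) E W. cpt_rep X lt V E W)"

definition is_module :: "'a set \<Rightarrow> ('a \<Rightarrow> 'a \<Rightarrow> bool) \<Rightarrow> 'a set \<Rightarrow> bool" where
  "is_module X lt M \<longleftrightarrow> M \<subseteq> X \<and>
     (\<forall>y\<in>X - M. (\<forall>m\<in>M. comparable lt y m) \<or> (\<forall>m\<in>M. \<not> comparable lt y m))"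

definition is_strong_module :: "'a set \<Rightarrow> ('a \<Rightarrow> 'a \<Rightarrow> bool) \<Rightarrow> 'a set \<Rightarrow> bool" where
  "is_strong_module X lt M \<longleftrightarrow> is_module X lt M \<and>
     (\<forall>M'. is_module X lt M' \<longrightarrow> M \<inter> M' = {} \<or> M \<subseteq> M' \<or> M' \<subseteq> M)"

end

theory Submission
  imports Defs
begin

theorem mainTheorem3:
  fixes X :: "'a set" and lt :: "'a \<Rightarrow> 'a \<Rightarrow> bool" and M :: "'a set"
  assumes "is_CPT_poset TYPE('v) X lt"
    and "is_strong_module X lt M"
    and "\<exists>(V::'v set) E W. cpt_rep X lt V E W \<and> (\<exists>x\<in>M. \<exists>v. W x = {v})"
  shows "\<not> (\<exists>m\<in>M. \<exists>y\<in>X - M. lt y m)"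
proof
  assume "\<exists>m\<in>M. \<exists>y\<in>X - M. lt y m"
  then obtain m y where mM: "m \<in> M" and yX: "y \<in> X" and yM: "y \<notin> M" and ym: "lt y m" by blast
  obtain V :: "'v set" and E W x v where cpt: "cpt_rep X lt V E W" and xM: "x \<in> M" and Wx: "W x = {v}"
    using assms(3) by blast
  have sp: "strict_poset X lt" using assms(1) unfolding is_CPT_poset_def by blast
  have irr: "\<And>a. a \<in> X \<Longrightarrow> \<not> lt a a" using sp unfolding strict_poset_def by blast
  have tr: "\<And>a b c. a \<in> X \<Longrightarrow> b \<in> X \<Longrightarrow> c \<in> X \<Longrightarrow> lt a b \<Longrightarrow> lt b c \<Longrightarrow> lt a c"
    using sp unfolding strict_poset_def by blast
  have modM: "is_module X lt M" and strong: "\<And>M'. is_module X lt M' \<Longrightarrow> M \<inter> M' = {} \<or> M \<subseteq> M' \<or> M' \<subseteq> M"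
    using assms(2) unfolding is_strong_module_def by blast+
  have MX: "M \<subseteq> X" using modM unfolding is_module_def by blast
  have modc: "\<And>z. z \<in> X - M \<Longrightarrow> (\<forall>w\<in>M. comparable lt z w) \<or> (\<forall>w\<in>M. \<not> comparable lt z w)"
    using modM unfolding is_module_def by blast
  have ycomp: "\<forall>w\<in>M. comparable lt y w"
    using modc[of y] yX yM mM ym unfolding comparable_def by blast
  have xX: "x \<in> X" using xM MX by blast
  have "is_path V E (W y)" using cpt yX unfolding cpt_rep_def by blast
  then have Wy: "W y \<noteq> {}" unfolding is_path_def by auto
  have "\<not> lt y x"
  proof
    assume "lt y x"
    then have "W y \<subset> {v}" using cpt yX xX Wx unfolding cpt_rep_def by blast
    then show False using Wy by blast
  qed
  then have xy: "lt x y" using ycomp xM unfolding comparable_def by blast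
  define U where "U = {w\<in>M. lt w y}"
  define T where "T = {w\<in>X-M. (\<forall>u\<in>U. lt u w) \<and> (\<forall>d\<in>M-U. lt w d)}"
  define C where "C = U \<union> T"
  have xU: "x \<in> U" using xM xy U_def by blast
  have DU: "\<And>d. d \<in> M - U \<Longrightarrow> lt y d" using ycomp U_def unfolding comparable_def by blast
  have mU: "m \<notin> U"
  proof
    assume "m \<in> U"
    then have "lt m y" using U_def by blast
    then show False using tr[of y m y] irr[of y] ym yX mM MX by blast
  qed
  have yT: "y \<in> T" using T_def yX yM DU U_def by blast
  have TX: "T \<subseteq> X" using T_def by blast
  have UX: "U \<subseteq> X" using U_def MX by blast
  have "is_module X lt C"
    unfolding is_module_def
  proof (intro conjI ballI)
    show "C \<subseteq> X" using TX UX C_def by blast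
  next
    fix z assume z: "z \<in> X - C"
    then have zX: "z \<in> X" by blast
    show "(\<forall>c\<in>C. comparable lt z c) \<or> (\<forall>c\<in>C. \<not> comparable lt z c)"
    proof (cases "z \<in> M")
      case True
      then have zd: "z \<in> M - U" using z C_def by blast
      then have yz: "lt y z" using DU by blast
      have "\<forall>c\<in>C. comparable lt z c"
      proof
        fix c assume "c \<in> C"
            then have "c \<in> U \<or> c \<in> T" using C_def by blast
        then show "comparable lt z c"
        proof
          assume "c \<in> U"
          then have "lt c y" "c \<in> X" using U_def MX by blast+
          then show ?thesis using tr[of c y z] yz yX zX unfolding comparable_def by blast
        next
          assume "c \<in> T"
          then show ?thesis using zd T_def unfolding comparable_def by blast
        qed
      qed
      then show ?thesis by blast
    next
      case False
      then have zXM: "z \<in> X - M" using zX by blast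
      have zT: "z \<notin> T" using z C_def by blast
      from modc[OF zXM] show ?thesis
      proof
        assume all: "\<forall>w\<in>M. comparable lt z w"
        from zT zXM obtain u where "u \<in> U \<and> \<not> lt u z \<or> u \<in> M - U \<and> \<not> lt z u"
          unfolding T_def by blast
        then show ?thesis
        proof
          assume a: "u \<in> U \<and> \<not> lt u z"
          then have uX: "u \<in> X" using UX by blast
          have zu: "lt z u" using a all U_def unfolding comparable_def by blast
          have "\<forall>c\<in>C. comparable lt z c"
          proof
            fix c assume "c \<in> C"
            then have "c \<in> U \<or> c \<in> T" using C_def by blast
            then show "comparable lt z c"
            proof
              assume "c \<in> U" then show ?thesis using all U_def unfolding comparable_def by blast
            next
              assume cT: "c \<in> T"
              then have "lt u c" "c \<in> X" using a T_def by blast+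
              then show ?thesis using tr[of z u c] zu zX uX unfolding comparable_def by blast
            qed
          qed
          then show ?thesis by blast
        next
          assume a: "u \<in> M - U \<and> \<not> lt z u"
          then have uX: "u \<in> X" using MX by blast
          have uz: "lt u z" using a all unfolding comparable_def by blast
          have "\<forall>c\<in>C. comparable lt z c"
          proof
            fix c assume "c \<in> C"
            then have "c \<in> U \<or> c \<in> T" using C_def by blast
            then show "comparable lt z c"
            proof
              assume "c \<in> U" then show ?thesis using all U_def unfolding comparable_def by blast
            next
              assume cT: "c \<in> T"
              then have "lt c u" "c \<in> X" using a T_def by blast+
              then show ?thesis using tr[of c u z] uz zX uX unfolding comparable_def by blast
            qed
          qed
          then show ?thesis by blast
        qed
      next
        assume none: "\<forall>w\<in>M. \<not> comparable lt z w"
        have "\<forall>c\<in>C. \<not> comparable lt z c"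
        proof
          fix c assume "c \<in> C"
            then have "c \<in> U \<or> c \<in> T" using C_def by blast
          then show "\<not> comparable lt z c"
          proof
            assume "c \<in> U" then show ?thesis using none U_def by blast
          next
            assume cT: "c \<in> T"
            then have cX: "c \<in> X" and xc: "lt x c" and cm: "lt c m"
              using xU mU mM T_def by blast+
            have mX: "m \<in> X" using mM MX by blast
            show ?thesis
            proof
              assume "comparable lt z c"
              then show False unfolding comparable_def
              proof
                assume "lt z c"
                then have "lt z m" using tr[of z c m] zX cX mX cm by blast
                then show False using none mM unfolding comparable_def by blast
              next
                assume "lt c z"
                then have "lt x z" using tr[of x c z] zX cX xX xc by blast
                then show False using none xM unfolding comparable_def by blast
              qed
            qed
          qed
        qed
        then show ?thesis by blast
      qed
    qed
  qed
  from strong[OF this] show False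
    using xU yT yM mM mU C_def U_def T_def by blast
qed

end
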